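(* For every $2n_1\in\{18,20\}$, $2n_2\in\{22,24,26\}$, $2n_3\in\{28,30\}$ and every integer $s\ge1$, there exist ternary Euclidean formally self-dual LCD codes with parameters $[4sn_1,2sn_1,6]_3$, $[4sn_2,2sn_2,7]_3$ and $[4sn_3,2sn_3,8]_3$. In addition, a ternary Euclidean formally self-dual LCD $[32s,16s,5]_3$ code exists for every integer $s\ge1$.
   Context: A linear code $\mathcal{C}$ over $\mathbb{F}_3$ is Euclidean LCD if $\mathcal{C}\cap\mathcal{C}^{\perp_E}=\{0\}$, where $\perp_E$ is the dual with respect to $\sum_ix_iy_i$; it is Euclidean formally self-dual if it has the same weight distribution as $\mathcal{C}^{\perp_E}$. $[n,k,d]_3$ denotes length $n$, dimension $k$, minimum distance $d$. *)

theory Defs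
  imports Complex_Main "HOL-Library.Function_Algebras"
begin

text \<open>Vectors of length N over a field 'a are functions nat => 'a vanishing outside {0..<N}.\<close>

definition vecs :: "nat \<Rightarrow> (nat \<Rightarrow> 'a::field) set" where
  "vecs N = {v. \<forall>i\<ge>N. v i = 0}"

definition vscale :: "'a::field \<Rightarrow> (nat \<Rightarrow> 'a) \<Rightarrow> (nat \<Rightarrow> 'a)" where
  "vscale c v = (\<lambda>i. c * v i)"

definition hwt :: "nat \<Rightarrow> (nat \<Rightarrow> 'a::field) \<Rightarrow> nat" where
  "hwt N v = card {i. i < N \<and> v i \<noteq> 0}"

definition euc_ip :: "nat \<Rightarrow> (nat \<Rightarrow> 'a::field) \<Rightarrow> (nat \<Rightarrow> 'a) \<Rightarrow> 'a" where
  "euc_ip N x y = (\<Sum>i<N. x i * y i)"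

definition linear_code :: "nat \<Rightarrow> nat \<Rightarrow> (nat \<Rightarrow> 'a::field) set \<Rightarrow> bool" where
  "linear_code N k C \<longleftrightarrow> C \<subseteq> vecs N \<and> module.subspace vscale C
     \<and> vector_space.dim vscale C = k"

definition min_dist :: "nat \<Rightarrow> (nat \<Rightarrow> 'a::field) set \<Rightarrow> nat" where
  "min_dist N C = Min {hwt N v | v. v \<in> C \<and> v \<noteq> 0}"

definition euc_dual :: "nat \<Rightarrow> (nat \<Rightarrow> 'a::field) set \<Rightarrow> (nat \<Rightarrow> 'a) set" where
  "euc_dual N C = {y \<in> vecs N. \<forall>x\<in>C. euc_ip N x y = 0}"

definition euc_LCD :: "nat \<Rightarrow> (nat \<Rightarrow> 'a::field) set \<Rightarrow> bool" where
  "euc_LCD N C \<longleftrightarrow> C \<inter> euc_dual N C = {0}"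

definition euc_fsd :: "nat \<Rightarrow> (nat \<Rightarrow> 'a::field) set \<Rightarrow> bool" where
  "euc_fsd N C \<longleftrightarrow> (\<forall>w. card {v \<in> C. hwt N v = w} = card {v \<in> euc_dual N C. hwt N v = w})"

definition fsd_lcd_code :: "nat \<Rightarrow> nat \<Rightarrow> nat \<Rightarrow> (nat \<Rightarrow> 'a::field) set \<Rightarrow> bool" where
  "fsd_lcd_code N k d C \<longleftrightarrow> linear_code N k C \<and> min_dist N C = d \<and> euc_LCD N C \<and> euc_fsd N C"

end

theory Submission
  imports Defs
begin

interpretation vs: vector_space "vscale :: 'a::field \<Rightarrow> (nat \<Rightarrow> 'a) \<Rightarrow> (nat \<Rightarrow> 'a)"
  by unfold_locales (auto simp: vscale_def fun_eq_iff algebra_simps)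

definition mulv :: "nat \<Rightarrow> (nat \<Rightarrow> nat \<Rightarrow> 'a::field) \<Rightarrow> (nat \<Rightarrow> 'a) \<Rightarrow> (nat \<Rightarrow> 'a)" where
  "mulv M A x = (\<lambda>j. if j < M then (\<Sum>i<M. x i * A i j) else 0)"

definition lo :: "nat \<Rightarrow> (nat \<Rightarrow> 'a::field) \<Rightarrow> (nat \<Rightarrow> 'a)" where
  "lo M v = (\<lambda>i. if i < M then v i else 0)"
definition hi :: "nat \<Rightarrow> (nat \<Rightarrow> 'a::field) \<Rightarrow> (nat \<Rightarrow> 'a)" where
  "hi M v = (\<lambda>i. if i < M then v (i + M) else 0)"

definition enc :: "nat \<Rightarrow> (nat \<Rightarrow> nat \<Rightarrow> 'a::field) \<Rightarrow> (nat \<Rightarrow> 'a) \<Rightarrow> (nat \<Rightarrow> 'a)" where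
  "enc M A x = (\<lambda>i. if i < M then x i else if i < 2*M then mulv M A x (i - M) else 0)"

definition phi :: "nat \<Rightarrow> (nat \<Rightarrow> 'a::field) \<Rightarrow> (nat \<Rightarrow> 'a)" where
  "phi M v = (\<lambda>i. if i < M then - v (i + M) else if i < 2*M then v (i - M) else 0)"

definition ev :: "nat \<Rightarrow> nat \<Rightarrow> 'a::field" where
  "ev i = (\<lambda>k. if k = i then 1 else 0)"

lemma sum_split2: "(\<Sum>i<2*(M::nat). f i) = (\<Sum>i<M. f i) + (\<Sum>i<M. f (i + M))"
proof -
  have "(\<Sum>i<2*M. f i) = sum f ({..<M} \<union> {M..<2*M})" by (intro sum.cong) auto
  also have "\<dots> = (\<Sum>i<M. f i) + (\<Sum>i\<in>{M..<2*M}. f i)"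
    by (rule sum.union_disjoint) auto
  also have "(\<Sum>i\<in>{M..<2*M}. f i) = (\<Sum>i<M. f (i + M))"
  proof -
    have "{M..<2*M} = (\<lambda>i. i + M) ` {..<M}"
    proof (intro equalityI subsetI)
      fix x assume "x \<in> {M..<2*M}"
      thus "x \<in> (\<lambda>i. i + M) ` {..<M}" by (intro image_eqI[where x="x - M"]) auto
    qed auto
    thus ?thesis by (simp add: sum.reindex inj_on_def)
  qed
  finally show ?thesis .
qed

lemma card_split2: "card {i::nat. i < 2*M \<and> P i} = card {i. i < M \<and> P i} + card {i. i < M \<and> P (i + M)}"
proof -
  have A: "{i. i < 2*M \<and> P i} = {i. i < M \<and> P i} \<union> (\<lambda>i. i + M) ` {i. i < M \<and> P (i + M)}"
  proof (intro equalityI subsetI)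
    fix x assume "x \<in> {i. i < 2*M \<and> P i}"
    thus "x \<in> {i. i < M \<and> P i} \<union> (\<lambda>i. i + M) ` {i. i < M \<and> P (i + M)}"
      by (cases "x < M") (auto intro!: image_eqI[where x="x - M"])
  qed auto
  have B: "card ((\<lambda>i. i + M) ` {i. i < M \<and> P (i + M)}) = card {i. i < M \<and> P (i + M)}"
    by (simp add: card_image inj_on_def)
  have C: "card ({i. i < M \<and> P i} \<union> (\<lambda>i. i + M) ` {i. i < M \<and> P (i + M)})
     = card {i. i < M \<and> P i} + card ((\<lambda>i. i + M) ` {i. i < M \<and> P (i + M)})"
    by (rule card_Un_disjoint) auto
  show ?thesis unfolding A C B by (rule refl)
qed

lemma hwt_split: "hwt (2*M) v = hwt M (lo M v) + hwt M (hi M v)"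
  unfolding hwt_def lo_def hi_def using card_split2[of M "\<lambda>i. v i \<noteq> 0"]
  by (simp cong: conj_cong)

lemma hwt_uminus: "hwt M (- v) = hwt M v"
  by (simp add: hwt_def)

lemma lo_enc: "x \<in> vecs M \<Longrightarrow> lo M (enc M A x) = x"
  by (auto simp: lo_def enc_def vecs_def fun_eq_iff)
lemma hi_enc: "hi M (enc M A x) = mulv M A x"
  by (auto simp: hi_def enc_def mulv_def fun_eq_iff)

lemma hwt_enc: "x \<in> vecs M \<Longrightarrow> hwt (2*M) (enc M A x) = hwt M x + hwt M (mulv M A x)"
  by (simp add: hwt_split lo_enc hi_enc)

lemma lo_phi: "lo M (phi M v) = - hi M v"
  by (auto simp: lo_def hi_def phi_def fun_eq_iff)
lemma hi_phi: "hi M (phi M v) = lo M v"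
  by (auto simp: lo_def hi_def phi_def fun_eq_iff)
lemma hwt_phi: "hwt (2*M) (phi M v) = hwt (2*M) v"
  by (simp add: hwt_split lo_phi hi_phi hwt_uminus)

lemma enc_vecs: "enc M A x \<in> vecs (2*M)"
  by (simp add: enc_def vecs_def)
lemma phi_vecs: "phi M v \<in> vecs (2*M)"
  by (simp add: phi_def vecs_def)

lemma phi_inj: "v \<in> vecs (2*M) \<Longrightarrow> w \<in> vecs (2*M) \<Longrightarrow> phi M v = phi M w \<Longrightarrow> v = w"
proof -
  assume v: "v \<in> vecs (2*M)" and w: "w \<in> vecs (2*M)" and e: "phi M v = phi M w"
  show "v = w"
  proof
    fix i
    show "v i = w i"
    proof (cases "i < M")
      case True
      from fun_cong[OF e, of "i + M"] True show ?thesis by (simp add: phi_def)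
    next
      case False
      show ?thesis
      proof (cases "i < 2*M")
        case True
        have "i - M < M" "i - M + M = i" using True False by auto
        with fun_cong[OF e, of "i - M"] show ?thesis by (simp add: phi_def)
      next
        case False thus ?thesis using v w by (simp add: vecs_def)
      qed
    qed
  qed
qed

lemma ip_split: "euc_ip (2*M) u w = euc_ip M (lo M u) (lo M w) + euc_ip M (hi M u) (hi M w)"
  unfolding euc_ip_def lo_def hi_def by (simp add: sum_split2)


definition code :: "nat \<Rightarrow> (nat \<Rightarrow> nat \<Rightarrow> 'a::field) \<Rightarrow> (nat \<Rightarrow> 'a) set" where
  "code M A = enc M A ` vecs M"

lemma mulv_vecs: "mulv M A x \<in> vecs M"
  by (simp add: mulv_def vecs_def)

lemma vecs_zero[simp]: "0 \<in> vecs M" by (simp add: vecs_def)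

lemma enc_add: "enc M A (x + y) = enc M A x + enc M A y"
  by (auto simp: enc_def mulv_def fun_eq_iff algebra_simps sum.distrib)
lemma enc_scale: "enc M A (vscale c x) = vscale c (enc M A x)"
  by (auto simp: enc_def mulv_def fun_eq_iff vscale_def sum_distrib_left algebra_simps)
lemma enc_zero[simp]: "enc M A 0 = 0"
  by (auto simp: enc_def mulv_def fun_eq_iff)

lemma vecs_add: "x \<in> vecs M \<Longrightarrow> y \<in> vecs M \<Longrightarrow> x + y \<in> vecs M"
  by (simp add: vecs_def)
lemma vecs_scale: "x \<in> vecs M \<Longrightarrow> vscale c x \<in> vecs M"
  by (simp add: vecs_def vscale_def)

lemma code_subspace: "vs.subspace (code M A)"
  unfolding vs.subspace_def code_def
proof (intro conjI ballI allI)
  show "0 \<in> enc M A ` vecs M" using enc_zero[of M A] vecs_zero[of M] by (metis image_eqI)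
next
  fix u v assume "u \<in> enc M A ` vecs M" "v \<in> enc M A ` vecs M"
  then obtain x y where "x \<in> vecs M" "y \<in> vecs M" "u = enc M A x" "v = enc M A y" by auto
  thus "u + v \<in> enc M A ` vecs M" using vecs_add enc_add by (metis image_eqI)
next
  fix c u assume "u \<in> enc M A ` vecs M"
  then obtain x where "x \<in> vecs M" "u = enc M A x" by auto
  thus "vscale c u \<in> enc M A ` vecs M" using vecs_scale enc_scale by (metis image_eqI)
qed

lemma fun_sum_apply: "(\<Sum>i\<in>I. f i) (k::nat) = (\<Sum>i\<in>I. (f i k :: 'a::comm_monoid_add))"
  by (induction I rule: infinite_finite_induct) auto

lemma vecs_expand: "x \<in> vecs M \<Longrightarrow> x = (\<Sum>i<M. vscale (x i) (ev i))"
proof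
  fix k assume x: "x \<in> vecs M"
  have "(\<Sum>i<M. vscale (x i) (ev i)) k = (\<Sum>i<M. x i * (if k = i then 1 else 0))"
    by (simp add: fun_sum_apply vscale_def ev_def)
  also have "\<dots> = (if k < M then x k else 0)"
    by (simp add: if_distrib[of "\<lambda>t. x _ * t"] sum.delta cong: if_cong)
  also have "\<dots> = x k" using x by (simp add: vecs_def)
  finally show "x k = (\<Sum>i<M. vscale (x i) (ev i)) k" by simp
qed

lemma ev_vecs: "i < M \<Longrightarrow> ev i \<in> vecs M"
  by (simp add: ev_def vecs_def)

lemma enc_sum: "enc M A (\<Sum>i\<in>I. f i) = (\<Sum>i\<in>I. enc M A (f i))"
  by (induction I rule: infinite_finite_induct)
    (metis sum.infinite enc_zero, metis sum.empty enc_zero, metis sum.insert enc_add)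

lemma code_dim: "vs.dim (code M A) = M"
proof -
  let ?B = "(\<lambda>i. enc M A (ev i)) ` {..<M}"
  have inj: "inj_on (\<lambda>i. enc M A (ev i)) {..<M}"
  proof
    fix i j assume "i \<in> {..<M}" "j \<in> {..<M}" "enc M A (ev i) = enc M A (ev j)"
    hence "enc M A (ev i) i = enc M A (ev j) i" by simp
    with \<open>i \<in> {..<M}\<close> show "i = j" by (auto simp: enc_def ev_def split: if_splits)
  qed
  have card: "card ?B = M" using inj by (simp add: card_image)
  have sub: "?B \<subseteq> code M A" unfolding code_def using ev_vecs by auto
  have span: "code M A \<subseteq> vs.span ?B"
  proof
    fix v assume "v \<in> code M A"
    then obtain x where x: "x \<in> vecs M" "v = enc M A x" by (auto simp: code_def)
    have "v = (\<Sum>i<M. enc M A (vscale (x i) (ev i)))"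
      using x vecs_expand[OF x(1)] enc_sum by metis
    also have "\<dots> = (\<Sum>i<M. vscale (x i) (enc M A (ev i)))" by (simp add: enc_scale)
    also have "\<dots> \<in> vs.span ?B"
      by (intro vs.span_sum vs.span_scale vs.span_base) auto
    finally show "v \<in> vs.span ?B" .
  qed
  have indep: "vs.independent ?B"
  proof
    assume "vs.dependent ?B"
    then obtain c v where h: "(\<Sum>v\<in>?B. vscale (c v) v) = 0" and v: "v \<in> ?B" and cv: "c v \<noteq> 0"
      using vs.dependent_finite[of ?B] by auto
    then obtain i where i: "i < M" "v = enc M A (ev i)" by auto
    have "(\<Sum>v\<in>?B. vscale (c v) v) i = (\<Sum>j<M. vscale (c (enc M A (ev j))) (enc M A (ev j))) i"
      by (simp add: sum.reindex[OF inj])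
    also have "\<dots> = (\<Sum>j<M. c (enc M A (ev j)) * (if i = j then 1 else 0))"
      using i by (simp add: fun_sum_apply vscale_def enc_def ev_def)
    also have "\<dots> = c v" using i by (simp add: if_distrib[of "\<lambda>t. _ * t"] sum.delta cong: if_cong)
    finally show False using h cv by simp
  qed
  have "card ?B = vs.dim (code M A)" by (rule vs.basis_card_eq_dim[OF sub span indep])
  with card show ?thesis by simp
qed

lemma code_linear: "linear_code (2*M) M (code M A)"
  unfolding linear_code_def using code_subspace code_dim enc_vecs
  by (auto simp: code_def)


definition symm :: "nat \<Rightarrow> (nat \<Rightarrow> nat \<Rightarrow> 'a) \<Rightarrow> bool" where
  "symm M A \<longleftrightarrow> (\<forall>i<M. \<forall>j<M. A i j = A j i)"

lemma ip_mulv_sym: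
  assumes "symm M A"
  shows "euc_ip M (mulv M A y) z = euc_ip M y (mulv M A z)"
proof -
  have "euc_ip M (mulv M A y) z = (\<Sum>j<M. \<Sum>i<M. y i * A i j * z j)"
    by (simp add: euc_ip_def mulv_def sum_distrib_right)
  also have "\<dots> = (\<Sum>i<M. \<Sum>j<M. y i * A i j * z j)" by (rule sum.swap)
  also have "\<dots> = (\<Sum>i<M. \<Sum>j<M. y i * (z j * A j i))"
    using assms by (intro sum.cong refl) (auto simp: symm_def)
  also have "\<dots> = euc_ip M y (mulv M A z)"
    by (simp add: euc_ip_def mulv_def sum_distrib_left)
  finally show ?thesis .
qed

lemma ip_enc: "y \<in> vecs M \<Longrightarrow>
  euc_ip (2*M) (enc M A y) w = euc_ip M y (lo M w) + euc_ip M (mulv M A y) (hi M w)"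
  by (simp add: ip_split lo_enc hi_enc)

lemma ip_uminus: "euc_ip M y (- z) = - euc_ip M y z"
  by (simp add: euc_ip_def sum_negf)

lemma ip_ev: "i < M \<Longrightarrow> euc_ip M (ev i) u = u i"
  by (simp add: euc_ip_def ev_def if_distrib[of "\<lambda>t. t * _"] sum.delta cong: if_cong)

lemma hi_vecs: "hi M w \<in> vecs M" by (simp add: hi_def vecs_def)

lemma dual_eq:
  assumes "symm M A"
  shows "euc_dual (2*M) (code M A) = phi M ` code M A"
proof (intro equalityI subsetI)
  fix w assume w: "w \<in> euc_dual (2*M) (code M A)"
  hence wv: "w \<in> vecs (2*M)" and orth: "\<And>y. y \<in> vecs M \<Longrightarrow> euc_ip (2*M) (enc M A y) w = 0"
    by (auto simp: euc_dual_def code_def)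
  let ?z = "hi M w"
  have "w = phi M (enc M A ?z)"
  proof
    fix i
    show "w i = phi M (enc M A ?z) i"
    proof (cases "i < M")
      case True
      have "0 = euc_ip (2*M) (enc M A (ev i)) w" using orth[OF ev_vecs[OF True]] by simp
      also have "\<dots> = euc_ip M (ev i) (lo M w) + euc_ip M (ev i) (mulv M A ?z)"
        by (subst ip_enc[OF ev_vecs[OF True]], subst ip_mulv_sym[OF assms], rule refl)
      also have "\<dots> = w i + mulv M A ?z i" using True by (simp add: ip_ev lo_def)
      finally have "w i = - mulv M A ?z i" by (simp add: eq_neg_iff_add_eq_0)
      thus ?thesis using True by (simp add: phi_def enc_def)
    next
      case False
      show ?thesis
      proof (cases "i < 2*M")
        case True
        have a: "i - M < M" and b: "i - M + M = i" using True False by auto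
        have "phi M (enc M A ?z) i = enc M A ?z (i - M)" using True False by (simp add: phi_def)
        also have "\<dots> = ?z (i - M)" using a by (simp add: enc_def)
        also have "\<dots> = w i" using a b by (simp add: hi_def)
        finally show ?thesis by simp
      next
        case F2: False
        thus ?thesis using wv False by (simp add: phi_def vecs_def)
      qed
    qed
  qed
  moreover have "enc M A ?z \<in> code M A" unfolding code_def by (rule imageI[OF hi_vecs])
  ultimately show "w \<in> phi M ` code M A" by blast
next
  fix w assume "w \<in> phi M ` code M A"
  then obtain x where x: "x \<in> vecs M" "w = phi M (enc M A x)" by (auto simp: code_def)
  have "euc_ip (2*M) (enc M A y) w = 0" if y: "y \<in> vecs M" for y
  proof -
    have "euc_ip (2*M) (enc M A y) w = euc_ip M y (- mulv M A x) + euc_ip M (mulv M A y) x"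
      using x y by (simp add: ip_enc lo_phi hi_phi lo_enc hi_enc)
    also have "\<dots> = 0" by (simp add: ip_uminus ip_mulv_sym[OF assms])
    finally show ?thesis .
  qed
  thus "w \<in> euc_dual (2*M) (code M A)"
    using x phi_vecs by (auto simp: euc_dual_def code_def)
qed

lemma code_vecs: "code M A \<subseteq> vecs (2*M)"
  using enc_vecs by (auto simp: code_def)

lemma code_fsd:
  assumes "symm M A"
  shows "euc_fsd (2*M) (code M A)"
  unfolding euc_fsd_def dual_eq[OF assms]
proof
  fix w
  have e: "{v \<in> phi M ` code M A. hwt (2*M) v = w} = phi M ` {v \<in> code M A. hwt (2*M) v = w}"
    by (auto simp: hwt_phi)
  have "inj_on (phi M) {v \<in> code M A. hwt (2*M) v = w}"
  proof (rule inj_onI)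
    fix a b assume "a \<in> {v \<in> code M A. hwt (2*M) v = w}" "b \<in> {v \<in> code M A. hwt (2*M) v = w}"
      "phi M a = phi M b"
    thus "a = b" using code_vecs[of M A] phi_inj[of a M b] by blast
  qed
  thus "card {v \<in> code M A. hwt (2*M) v = w} = card {v \<in> phi M ` code M A. hwt (2*M) v = w}"
    unfolding e by (simp add: card_image)
qed

definition lcdprop :: "nat \<Rightarrow> (nat \<Rightarrow> nat \<Rightarrow> 'a::field) \<Rightarrow> bool" where
  "lcdprop M A \<longleftrightarrow> (\<forall>x\<in>vecs M. x + mulv M A (mulv M A x) = 0 \<longrightarrow> x = 0)"

lemma code_lcd:
  assumes "symm M A" "lcdprop M A"
  shows "euc_LCD (2*M) (code M A)"
  unfolding euc_LCD_def dual_eq[OF assms(1)]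
proof (intro equalityI subsetI)
  fix v assume "v \<in> code M A \<inter> phi M ` code M A"
  then obtain x z where x: "x \<in> vecs M" "v = enc M A x" and z: "z \<in> vecs M" "v = phi M (enc M A z)"
    by (auto simp: code_def)
  have "lo M v = x" "hi M v = mulv M A x" using x by (simp_all add: lo_enc hi_enc)
  moreover have "lo M v = - mulv M A z" "hi M v = z" using z by (simp_all add: lo_phi hi_phi lo_enc hi_enc)
  ultimately have "- mulv M A (mulv M A x) = x" by simp
  hence "x + mulv M A (mulv M A x) = 0" by (metis add.left_inverse)
  hence "x = 0" using assms(2) x(1) by (simp add: lcdprop_def)
  thus "v \<in> {0}" using x by simp
next
  fix v assume "v \<in> {0::nat \<Rightarrow> 'a}"
  hence v: "v = enc M A 0" by simp
  have "enc M A 0 \<in> code M A" unfolding code_def by (rule imageI[OF vecs_zero])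
  moreover have "phi M (enc M A 0) = enc M A 0" by (simp add: phi_def fun_eq_iff)
  ultimately show "v \<in> code M A \<inter> phi M ` code M A" using v by (metis IntI image_eqI)
qed

lemma hwt_le: "hwt N v \<le> N"
proof -
  have "{i. i < N \<and> v i \<noteq> 0} \<subseteq> {..<N}" by auto
  hence "card {i. i < N \<and> v i \<noteq> 0} \<le> card {..<N}" by (intro card_mono) auto
  thus ?thesis by (simp add: hwt_def)
qed

lemma code_min_dist:
  assumes dist: "\<And>x. x \<in> vecs M \<Longrightarrow> x \<noteq> 0 \<Longrightarrow> d \<le> hwt M x + hwt M (mulv M A x)"
    and ach: "x0 \<in> vecs M" "x0 \<noteq> 0" "hwt M x0 + hwt M (mulv M A x0) = d"
  shows "min_dist (2*M) (code M A) = d"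
  unfolding min_dist_def
proof (rule Min_eqI)
  show "finite {hwt (2*M) v |v. v \<in> code M A \<and> v \<noteq> 0}"
    by (rule finite_subset[of _ "{..2*M}"]) (auto simp: hwt_le)
next
  fix y assume "y \<in> {hwt (2*M) v |v. v \<in> code M A \<and> v \<noteq> 0}"
  then obtain x where x: "x \<in> vecs M" "enc M A x \<noteq> 0" "y = hwt (2*M) (enc M A x)" by (auto simp: code_def)
  have "x \<noteq> 0" using x(2) by auto
  thus "d \<le> y" using x dist by (simp add: hwt_enc)
next
  have "lo M (0::nat \<Rightarrow> 'a) = 0" by (simp add: lo_def fun_eq_iff)
  hence "enc M A x0 \<noteq> 0" using ach lo_enc[OF ach(1), of A] by metis
  moreover have "hwt (2*M) (enc M A x0) = d" using ach by (simp add: hwt_enc)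
  ultimately show "d \<in> {hwt (2*M) v |v. v \<in> code M A \<and> v \<noteq> 0}"
    using ach by (auto simp: code_def)
qed

theorem code_main:
  assumes "symm M A" "lcdprop M A"
    and dist: "\<And>x. x \<in> vecs M \<Longrightarrow> x \<noteq> 0 \<Longrightarrow> d \<le> hwt M x + hwt M (mulv M A x)"
    and ach: "x0 \<in> vecs M" "x0 \<noteq> 0" "hwt M x0 + hwt M (mulv M A x0) = d"
  shows "fsd_lcd_code (2*M) M d (code M A)"
  unfolding fsd_lcd_code_def
  using code_linear code_min_dist[OF dist ach] code_lcd[OF assms(1,2)] code_fsd[OF assms(1)] by blast


definition blk :: "nat \<Rightarrow> (nat \<Rightarrow> nat \<Rightarrow> 'a::field) \<Rightarrow> nat \<Rightarrow> nat \<Rightarrow> 'a" where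
  "blk m Ah = (\<lambda>i j. if i div m = j div m then Ah (i mod m) (j mod m) else 0)"

definition part :: "nat \<Rightarrow> (nat \<Rightarrow> 'a::field) \<Rightarrow> nat \<Rightarrow> nat \<Rightarrow> 'a" where
  "part m x b = (\<lambda>k. if k < m then x (b*m + k) else 0)"

lemma part_vecs: "part m x b \<in> vecs m" by (simp add: part_def vecs_def)

lemma blk_range: "b < r \<Longrightarrow> k < m \<Longrightarrow> b*m + k < r*(m::nat)"
proof -
  assume "b < r" "k < m"
  hence "b*m + k < b*m + m" by simp
  also have "\<dots> = Suc b * m" by simp
  also have "\<dots> \<le> r*m" using \<open>b < r\<close> by (intro mult_le_mono1) simp
  finally show ?thesis .
qed

lemma sum_block:
  fixes m b r :: nat
  assumes "b < r"
  shows "(\<Sum>i<r*m. if i div m = b then g i else 0) = (\<Sum>k<m. g (b*m + k))"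
proof (cases "m = 0")
  case True thus ?thesis by simp
next
  case False
  have "(\<Sum>i<r*m. if i div m = b then g i else 0) = (\<Sum>i\<in>{i\<in>{..<r*m}. i div m = b}. g i)"
    by (rule sum.inter_filter[symmetric]) simp
  also have "{i\<in>{..<r*m}. i div m = b} = (\<lambda>k. b*m + k) ` {..<m}"
  proof (intro equalityI subsetI)
    fix i assume "i \<in> {i\<in>{..<r*m}. i div m = b}"
    hence "i div m = b" by simp
    hence "i = b*m + i mod m" by (metis div_mult_mod_eq mult.commute)
    moreover have "i mod m < m" using False by simp
    ultimately show "i \<in> (\<lambda>k. b*m + k) ` {..<m}" by (metis image_eqI lessThan_iff)
  next
    fix i assume "i \<in> (\<lambda>k. b*m + k) ` {..<m}"
    then obtain k where k: "k < m" "i = b*m + k" by auto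
    hence "i div m = b" using False by simp
    moreover have "i < r*m" using k blk_range[OF assms k(1)] by simp
    ultimately show "i \<in> {i\<in>{..<r*m}. i div m = b}" by simp
  qed
  also have "(\<Sum>i\<in>(\<lambda>k. b*m + k) ` {..<m}. g i) = (\<Sum>k<m. g (b*m + k))"
    by (simp add: sum.reindex inj_on_def)
  finally show ?thesis .
qed

lemma div_lt: "j < r*m \<Longrightarrow> j div m < (r::nat)"
  by (simp add: less_mult_imp_div_less)

lemma mulv_blk:
  assumes "j < r*m"
  shows "mulv (r*m) (blk m Ah) x j = mulv m Ah (part m x (j div m)) (j mod m)"
proof -
  have m: "m > 0" using assms by (cases m) auto
  have "mulv (r*m) (blk m Ah) x j = (\<Sum>i<r*m. if i div m = j div m then x i * Ah (i mod m) (j mod m) else 0)"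
    using assms by (simp add: mulv_def blk_def if_distrib[of "\<lambda>t. x _ * t"] cong: if_cong)
  also have "\<dots> = (\<Sum>k<m. x (j div m * m + k) * Ah ((j div m * m + k) mod m) (j mod m))"
    by (rule sum_block[OF div_lt[OF assms]])
  also have "\<dots> = (\<Sum>k<m. part m x (j div m) k * Ah k (j mod m))"
    by (intro sum.cong refl) (simp add: part_def)
  also have "\<dots> = mulv m Ah (part m x (j div m)) (j mod m)"
    using m by (simp add: mulv_def)
  finally show ?thesis .
qed

lemma part_mulv_blk:
  assumes "b < r"
  shows "part m (mulv (r*m) (blk m Ah) x) b = mulv m Ah (part m x b)"
proof
  fix k
  show "part m (mulv (r*m) (blk m Ah) x) b k = mulv m Ah (part m x b) k"
  proof (cases "k < m")
    case True
    have lt: "b*m + k < r*m" by (rule blk_range[OF assms True])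
    have "(b*m + k) div m = b" "(b*m + k) mod m = k" using True by auto
    thus ?thesis using True mulv_blk[OF lt, of Ah x] by (simp add: part_def)
  next
    case False thus ?thesis by (simp add: part_def mulv_def)
  qed
qed

lemma card_split_add: "card {i::nat. i < a + b \<and> P i} = card {i. i < a \<and> P i} + card {i. i < b \<and> P (a + i)}"
proof -
  have A: "{i. i < a + b \<and> P i} = {i. i < a \<and> P i} \<union> (\<lambda>i. a + i) ` {i. i < b \<and> P (a + i)}"
  proof (intro equalityI subsetI)
    fix x assume "x \<in> {i. i < a + b \<and> P i}"
    thus "x \<in> {i. i < a \<and> P i} \<union> (\<lambda>i. a + i) ` {i. i < b \<and> P (a + i)}"
      by (cases "x < a") (auto intro!: image_eqI[where x="x - a"])
  qed auto
  have B: "card ((\<lambda>i. a + i) ` {i. i < b \<and> P (a + i)}) = card {i. i < b \<and> P (a + i)}"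
    by (simp add: card_image inj_on_def)
  have C: "card ({i. i < a \<and> P i} \<union> (\<lambda>i. a + i) ` {i. i < b \<and> P (a + i)})
     = card {i. i < a \<and> P i} + card ((\<lambda>i. a + i) ` {i. i < b \<and> P (a + i)})"
    by (rule card_Un_disjoint) auto
  show ?thesis unfolding A C B by (rule refl)
qed

lemma hwt_blocks: "hwt (r*m) v = (\<Sum>b<r. hwt m (part m v b))"
proof (induction r)
  case 0 thus ?case by (simp add: hwt_def)
next
  case (Suc r)
  have "hwt (Suc r * m) v = card {i. i < r*m + m \<and> v i \<noteq> 0}" by (simp add: hwt_def add.commute)
  also have "\<dots> = hwt (r*m) v + card {i. i < m \<and> v (r*m + i) \<noteq> 0}"
    by (simp add: card_split_add hwt_def)
  also have "card {i. i < m \<and> v (r*m + i) \<noteq> 0} = hwt m (part m v r)"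
    unfolding hwt_def part_def by (rule arg_cong[where f=card]) auto
  finally show ?case using Suc by simp
qed

lemma part_nonzero:
  assumes "x \<in> vecs (r*m)" "x \<noteq> 0"
  shows "\<exists>b<r. part m x b \<noteq> 0"
proof -
  have "\<exists>i. x i \<noteq> 0"
  proof (rule ccontr)
    assume "\<not> (\<exists>i. x i \<noteq> 0)"
    hence "x = 0" by (simp add: fun_eq_iff)
    thus False using assms(2) by simp
  qed
  then obtain i where i: "x i \<noteq> 0" by blast
  hence lt: "i < r*m" using assms(1) by (auto simp: vecs_def not_less[symmetric])
  hence m: "m > 0" by (cases m) auto
  have "part m x (i div m) (i mod m) = x i" using m by (simp add: part_def mult.commute)
  hence "part m x (i div m) \<noteq> 0" using i by auto
  thus ?thesis using div_lt[OF lt] by blast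
qed

lemma part_add: "part m (x + y) b = part m x b + part m y b"
  by (simp add: part_def fun_eq_iff)

lemma blk_symm: "symm m Ah \<Longrightarrow> symm (r*m) (blk m Ah)"
  unfolding symm_def blk_def
proof (intro allI impI)
  fix i j assume s: "\<forall>i<m. \<forall>j<m. Ah i j = Ah j i" and "i < r*m" "j < r*m"
  hence "m > 0" by (cases m) auto
  thus "(if i div m = j div m then Ah (i mod m) (j mod m) else 0) =
        (if j div m = i div m then Ah (j mod m) (i mod m) else 0)" using s by auto
qed

lemma blk_lcd:
  assumes "lcdprop m Ah"
  shows "lcdprop (r*m) (blk m Ah)"
  unfolding lcdprop_def
proof (intro ballI impI)
  fix x :: "nat \<Rightarrow> 'a" assume x: "x \<in> vecs (r*m)" and e: "x + mulv (r*m) (blk m Ah) (mulv (r*m) (blk m Ah) x) = 0"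
  have "part m x b = 0" if b: "b < r" for b
  proof -
    have "part m (x + mulv (r*m) (blk m Ah) (mulv (r*m) (blk m Ah) x)) b = 0"
      using e by (simp add: part_def fun_eq_iff)
    hence "part m x b + mulv m Ah (mulv m Ah (part m x b)) = 0"
      by (simp add: part_add part_mulv_blk[OF b])
    thus ?thesis using assms part_vecs[of m x b] unfolding lcdprop_def by blast
  qed
  thus "x = 0" using part_nonzero[OF x] by blast
qed

lemma blk_dist:
  assumes dist: "\<And>x. x \<in> vecs m \<Longrightarrow> x \<noteq> 0 \<Longrightarrow> d \<le> hwt m x + hwt m (mulv m Ah x)"
    and x: "x \<in> vecs (r*m)" "x \<noteq> 0"
  shows "d \<le> hwt (r*m) x + hwt (r*m) (mulv (r*m) (blk m Ah) x)"
proof -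
  obtain b where b: "b < r" "part m x b \<noteq> 0" using part_nonzero[OF x] by blast
  have "hwt (r*m) x + hwt (r*m) (mulv (r*m) (blk m Ah) x)
     = (\<Sum>c<r. hwt m (part m x c) + hwt m (mulv m Ah (part m x c)))"
    by (simp add: hwt_blocks[of r m] sum.distrib part_mulv_blk)
  also have "\<dots> \<ge> hwt m (part m x b) + hwt m (mulv m Ah (part m x b))"
    by (rule member_le_sum) (use b in auto)
  finally show ?thesis using dist[OF part_vecs b(2)] by linarith
qed

lemma hwt_zero[simp]: "hwt N 0 = 0" by (simp add: hwt_def)

lemma mulv_zero[simp]: "mulv M A 0 = 0" by (simp add: mulv_def fun_eq_iff)

lemma blk_ach:
  assumes ach: "x0 \<in> vecs m" "x0 \<noteq> 0" "hwt m x0 + hwt m (mulv m Ah x0) = d" and r: "r \<ge> 1"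
  shows "x0 \<in> vecs (r*m) \<and> x0 \<noteq> 0 \<and> hwt (r*m) x0 + hwt (r*m) (mulv (r*m) (blk m Ah) x0) = d"
proof -
  have "m \<le> r*m" using r by simp
  note mle = this
  have "x0 i = 0" if "i \<ge> r*m" for i
  proof -
    have "i \<ge> m" using that mle by linarith
    thus ?thesis using ach(1) by (simp add: vecs_def)
  qed
  hence v: "x0 \<in> vecs (r*m)" by (simp add: vecs_def)
  have p0: "part m x0 0 = x0" using ach(1) by (auto simp: part_def vecs_def fun_eq_iff)
  have pc: "part m x0 c = 0" if "c \<ge> 1" for c
  proof -
    have "m \<le> c*m" using that by simp
    hence "c*m + k \<ge> m" for k by linarith
    thus ?thesis using ach(1) by (auto simp: part_def vecs_def fun_eq_iff)
  qed
  have "hwt (r*m) x0 + hwt (r*m) (mulv (r*m) (blk m Ah) x0)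
     = (\<Sum>c<r. hwt m (part m x0 c) + hwt m (mulv m Ah (part m x0 c)))"
    by (simp add: hwt_blocks[of r m] sum.distrib part_mulv_blk)
  also have "\<dots> = (\<Sum>c\<in>{0}. hwt m (part m x0 c) + hwt m (mulv m Ah (part m x0 c)))"
    by (rule sum.mono_neutral_right) (use r pc in auto)
  also have "\<dots> = d" using p0 ach(3) by simp
  finally show ?thesis using v ach(2) by simp
qed

theorem blk_main:
  fixes Ah :: "nat \<Rightarrow> nat \<Rightarrow> 'a::field"
  assumes "symm m Ah" "lcdprop m Ah"
    and dist: "\<And>x. x \<in> vecs m \<Longrightarrow> x \<noteq> 0 \<Longrightarrow> d \<le> hwt m x + hwt m (mulv m Ah x)"
    and ach: "x0 \<in> vecs m" "x0 \<noteq> 0" "hwt m x0 + hwt m (mulv m Ah x0) = d"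
    and r: "r \<ge> 1"
  shows "\<exists>C :: (nat \<Rightarrow> 'a) set. fsd_lcd_code (2*(r*m)) (r*m) d C"
proof -
  have a: "x0 \<in> vecs (r*m)" "x0 \<noteq> 0" "hwt (r*m) x0 + hwt (r*m) (mulv (r*m) (blk m Ah) x0) = d"
    using blk_ach[OF ach r] by auto
  have d: "\<And>x. x \<in> vecs (r*m) \<Longrightarrow> x \<noteq> 0 \<Longrightarrow> d \<le> hwt (r*m) x + hwt (r*m) (mulv (r*m) (blk m Ah) x)"
    using blk_dist[OF dist] by blast
  have "fsd_lcd_code (2*(r*m)) (r*m) d (code (r*m) (blk m Ah))"
    by (rule code_main[OF blk_symm[OF assms(1)] blk_lcd[OF assms(2)] d a])
  thus ?thesis by blast
qed


datatype f3 = Z | P | N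

fun fadd :: "f3 \<Rightarrow> f3 \<Rightarrow> f3" where
  "fadd Z y = y" | "fadd x Z = x" | "fadd P P = N" | "fadd N N = P" | "fadd P N = Z" | "fadd N P = Z"

fun fmul :: "f3 \<Rightarrow> f3 \<Rightarrow> f3" where
  "fmul Z y = Z" | "fmul x Z = Z" | "fmul P y = y" | "fmul N P = N" | "fmul N N = P"

fun hf :: "f3 \<Rightarrow> 'a::field" where
  "hf Z = 0" | "hf P = 1" | "hf N = -1"

lemma card3_facts:
  assumes "card (UNIV :: 'a::field set) = 3"
  shows "(1::'a) + 1 = -1" and "(1::'a) \<noteq> -1" and "\<And>y::'a. y = 0 \<or> y = 1 \<or> y = -1"
proof -
  have fin: "finite (UNIV::'a set)" using assms card.infinite by fastforce
  have full: "\<And>S::'a set. card S = 3 \<Longrightarrow> S = UNIV"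
    using assms card_subset_eq[OF fin subset_UNIV] by metis
  have ne: "(1::'a) + 1 \<noteq> 0"
  proof
    assume h: "(1::'a) + 1 = 0"
    hence m1: "(1::'a) = -1" by (simp add: eq_neg_iff_add_eq_0)
    have "{0::'a, 1} \<noteq> UNIV" using assms by (metis card_2_iff numeral_eq_iff semiring_norm(88) zero_neq_one) 
    then obtain c :: 'a where c: "c \<notin> {0, 1}" by blast
    hence "card {0::'a, 1, c} = 3" by auto
    hence U: "{0::'a, 1, c} = UNIV" by (rule full)
    have "c + 1 \<in> {0, 1, c}" using U by simp
    moreover have "c + 1 \<noteq> 0"
    proof
      assume "c + 1 = 0"
      hence "c = -1" by (simp add: eq_neg_iff_add_eq_0)
      thus False using c m1 by simp
    qed
    moreover have "c + 1 \<noteq> 1" using c by simp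
    moreover have "c + 1 \<noteq> c" by simp
    ultimately show False by blast
  qed
  have three: "{0::'a, 1, 1 + 1} = UNIV"
  proof -
    have "(1::'a) + 1 \<noteq> 1" by (metis add_cancel_right_right one_neq_zero)
    hence "card {0::'a, 1, 1 + 1} = 3" using ne by simp
    thus ?thesis by (rule full)
  qed
  have n1: "(-1::'a) \<noteq> 1"
  proof
    assume "(-1::'a) = 1"
    hence "(1::'a) = -1" by simp
    hence "(1::'a) + 1 = 0" by (simp add: eq_neg_iff_add_eq_0)
    thus False using ne by simp
  qed
  have "(-1::'a) \<in> {0, 1, 1 + 1}" using three by simp
  moreover have "(-1::'a) \<noteq> 0" by simp
  ultimately have e: "(-1::'a) = 1 + 1" using n1 by blast
  thus "(1::'a) + 1 = -1" by simp
  show "(1::'a) \<noteq> -1" using n1 by auto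
  fix y :: 'a
  have "y \<in> {0, 1, 1 + 1}" using three by simp
  thus "y = 0 \<or> y = 1 \<or> y = -1" using e by auto
qed

context
  fixes TYPE :: "'a::field itself"
  assumes c3: "card (UNIV :: 'a set) = 3"
begin

lemma hf_add: "(hf (fadd x y) :: 'a) = hf x + hf y"
proof -
  have a: "(1::'a) + 1 = -1" by (rule card3_facts(1)[OF c3])
  hence b: "(-1::'a) + -1 = 1" by (metis add.inverse_inverse minus_add_distrib)
  have c: "(3::'a) = 0"
  proof -
    have "(3::'a) = 1 + 1 + 1" by simp
    also have "\<dots> = 0" using a by simp
    finally show ?thesis .
  qed
  show ?thesis by (cases x; cases y) (simp_all add: a b c)
qed

lemma hf_mul: "(hf (fmul x y) :: 'a) = hf x * hf y"
  by (cases x; cases y) simp_all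

lemma hf_zero: "((hf x :: 'a) = 0) \<longleftrightarrow> x = Z"
  by (cases x) simp_all

lemma hf_nz: "(y::'a) \<noteq> 0 \<Longrightarrow> y = hf P \<or> y = hf N"
  using card3_facts(3)[OF c3, of y] by auto

end


definition hm :: "f3 list list \<Rightarrow> nat \<Rightarrow> nat \<Rightarrow> 'a::field" where
  "hm L = (\<lambda>i j. hf (L!i!j))"

fun dsum :: "(nat \<Rightarrow> f3) \<Rightarrow> nat \<Rightarrow> f3" where
  "dsum f 0 = Z" | "dsum f (Suc k) = fadd (dsum f k) (f k)"

definition dotc :: "nat \<Rightarrow> f3 list list \<Rightarrow> f3 list list \<Rightarrow> nat \<Rightarrow> nat \<Rightarrow> f3" where
  "dotc m X Y i j = dsum (\<lambda>k. fmul (X!i!k) (Y!k!j)) m"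

definition idm :: "nat \<Rightarrow> nat \<Rightarrow> f3" where "idm i j = (if i = j then P else Z)"

definition allm :: "nat \<Rightarrow> (nat \<Rightarrow> bool) \<Rightarrow> bool" where "allm m p = list_all p [0..<m]"

lemma allm_iff: "allm m p \<longleftrightarrow> (\<forall>i<m. p i)" by (auto simp: allm_def list_all_iff)

definition vadd :: "f3 list \<Rightarrow> f3 list \<Rightarrow> f3 list" where "vadd r s = map2 fadd r s"
definition sc :: "f3 \<Rightarrow> f3 list \<Rightarrow> f3 list" where "sc v r = map (fmul v) r"
definition wtl :: "f3 list \<Rightarrow> nat" where "wtl r = length (filter (\<lambda>x. x \<noteq> Z) r)"

definition chk1 :: "nat \<Rightarrow> nat \<Rightarrow> f3 list list \<Rightarrow> bool" where
  "chk1 m d L = allm m (\<lambda>a. d \<le> Suc (wtl (L!a)))"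
definition chk2 :: "nat \<Rightarrow> nat \<Rightarrow> f3 list list \<Rightarrow> bool" where
  "chk2 m d L = allm m (\<lambda>a. allm a (\<lambda>b. list_all (\<lambda>vb. d \<le> 2 + wtl (vadd (L!a) (sc vb (L!b)))) [P,N]))"
definition chk3 :: "nat \<Rightarrow> nat \<Rightarrow> f3 list list \<Rightarrow> bool" where
  "chk3 m d L = allm m (\<lambda>a. allm a (\<lambda>b. allm b (\<lambda>c. list_all (\<lambda>vb. list_all (\<lambda>vc.
     d \<le> 3 + wtl (vadd (L!a) (vadd (sc vb (L!b)) (sc vc (L!c))))) [P,N]) [P,N])))"

definition rowsok :: "nat \<Rightarrow> f3 list list \<Rightarrow> bool" where
  "rowsok m L \<longleftrightarrow> allm m (\<lambda>i. length (L!i) = m)"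

definition smallprop :: "nat \<Rightarrow> (nat \<Rightarrow> nat \<Rightarrow> 'a::field) \<Rightarrow> nat \<Rightarrow> nat \<Rightarrow> bool" where
  "smallprop m A t d \<longleftrightarrow> (\<forall>x\<in>vecs m. x \<noteq> 0 \<longrightarrow> hwt m x \<le> t \<longrightarrow> d \<le> hwt m x + hwt m (mulv m A x))"

lemma mulv_mulv:
  fixes A B :: "nat \<Rightarrow> nat \<Rightarrow> 'a::field"
  assumes inv: "\<And>i j. i < m \<Longrightarrow> j < m \<Longrightarrow> (\<Sum>k<m. A i k * B k j) = (if i = j then 1 else 0)"
    and x: "x \<in> vecs m"
  shows "mulv m B (mulv m A x) = x"
proof
  fix j
  show "mulv m B (mulv m A x) j = x j"
  proof (cases "j < m")
    case True
    have "mulv m B (mulv m A x) j = (\<Sum>l<m. (\<Sum>i<m. x i * A i l) * B l j)"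
      using True by (simp add: mulv_def)
    also have "\<dots> = (\<Sum>l<m. \<Sum>i<m. x i * (A i l * B l j))"
      by (simp add: sum_distrib_right mult.assoc)
    also have "\<dots> = (\<Sum>i<m. \<Sum>l<m. x i * (A i l * B l j))"
      by (rule sum.swap)
    also have "\<dots> = (\<Sum>i<m. x i * (\<Sum>l<m. A i l * B l j))"
      by (simp add: sum_distrib_left)
    also have "\<dots> = (\<Sum>i<m. x i * (if i = j then 1 else 0))"
      using True inv by (intro sum.cong refl) simp
    also have "\<dots> = x j" using True by (simp add: if_distrib[of "\<lambda>t. _ * t"] sum.delta cong: if_cong)
    finally show ?thesis .
  next
    case False thus ?thesis using x by (simp add: mulv_def vecs_def)
  qed
qed

lemma lcd_from_inv:
  fixes A Q K :: "nat \<Rightarrow> nat \<Rightarrow> 'a::field"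
  assumes q: "\<And>i k. i < m \<Longrightarrow> k < m \<Longrightarrow> Q i k = (if i = k then 1 else 0) + (\<Sum>l<m. A i l * A l k)"
    and inv: "\<And>i j. i < m \<Longrightarrow> j < m \<Longrightarrow> (\<Sum>k<m. Q i k * K k j) = (if i = j then 1 else 0)"
  shows "lcdprop m A"
  unfolding lcdprop_def
proof (intro ballI impI)
  fix x assume x: "x \<in> vecs m" and e: "x + mulv m A (mulv m A x) = 0"
  have "x + mulv m A (mulv m A x) = mulv m Q x"
  proof
    fix j
    show "(x + mulv m A (mulv m A x)) j = mulv m Q x j"
    proof (cases "j < m")
      case True
      have s0: "(x + mulv m A (mulv m A x)) j = x j + (\<Sum>l<m. (\<Sum>i<m. x i * A i l) * A l j)"
        using True by (simp add: mulv_def)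
      have s1: "(\<Sum>l<m. (\<Sum>i<m. x i * A i l) * A l j) = (\<Sum>i<m. x i * (\<Sum>l<m. A i l * A l j))"
      proof -
        have "(\<Sum>l<m. (\<Sum>i<m. x i * A i l) * A l j) = (\<Sum>l<m. \<Sum>i<m. x i * (A i l * A l j))"
          by (simp add: sum_distrib_right mult.assoc)
        also have "\<dots> = (\<Sum>i<m. \<Sum>l<m. x i * (A i l * A l j))"
          by (rule sum.swap)
        also have "\<dots> = (\<Sum>i<m. x i * (\<Sum>l<m. A i l * A l j))"
          by (simp add: sum_distrib_left)
        finally show ?thesis .
      qed
      have s2: "x j = (\<Sum>i<m. x i * (if i = j then 1 else 0))"
        using True by (simp add: if_distrib[of "\<lambda>t. _ * t"] sum.delta cong: if_cong)
      have s3: "(\<Sum>i<m. x i * Q i j) = (\<Sum>i<m. x i * (if i = j then 1 else 0) + x i * (\<Sum>l<m. A i l * A l j))"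
        by (rule sum.cong) (auto simp: q True distrib_left)
      have "(x + mulv m A (mulv m A x)) j = (\<Sum>i<m. x i * Q i j)"
        unfolding s0 s1 s3 sum.distrib using s2 by simp
      also have "\<dots> = mulv m Q x j" using True by (simp add: mulv_def)
      finally show ?thesis .
    next
      case False thus ?thesis using x by (simp add: mulv_def vecs_def)
    qed
  qed
  hence "mulv m Q x = 0" using e by simp
  moreover have "mulv m K (mulv m Q x) = x" by (rule mulv_mulv[OF inv x])
  ultimately show "x = 0" by simp
qed

lemma dist_from_small:
  fixes A B :: "nat \<Rightarrow> nat \<Rightarrow> 'a::field"
  assumes sa: "smallprop m A t d" and sb: "smallprop m B t d"
    and inv: "\<And>i j. i < m \<Longrightarrow> j < m \<Longrightarrow> (\<Sum>k<m. A i k * B k j) = (if i = j then 1 else 0)"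
    and dt: "d \<le> 2*t + 2"
    and x: "x \<in> vecs m" "x \<noteq> 0"
  shows "d \<le> hwt m x + hwt m (mulv m A x)"
proof (cases "hwt m x \<le> t")
  case True thus ?thesis using sa x by (simp add: smallprop_def)
next
  case F1: False
  show ?thesis
  proof (cases "hwt m (mulv m A x) \<le> t")
    case False thus ?thesis using F1 dt by linarith
  next
    case True
    have bk: "mulv m B (mulv m A x) = x" by (rule mulv_mulv[OF inv x(1)])
    have "mulv m A x \<noteq> 0"
    proof
      assume "mulv m A x = 0"
      hence "mulv m B (mulv m A x) = 0" by simp
      thus False using bk x(2) by simp
    qed
    hence "d \<le> hwt m (mulv m A x) + hwt m (mulv m B (mulv m A x))"
      using sb True mulv_vecs[of m A x] unfolding smallprop_def by blast
    thus ?thesis using bk by simp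
  qed
qed

context
  fixes TYPE :: "'a::field itself"
  assumes c3: "card (UNIV :: 'a set) = 3"
begin

lemma hf_dsum: "(hf (dsum f k) :: 'a) = (\<Sum>i<k. hf (f i))"
  by (induction k) (simp_all add: hf_add[OF c3])

lemma hf_dotc: "(hf (dotc m X Y i j) :: 'a) = (\<Sum>k<m. hm X i k * hm Y k j)"
  by (simp add: dotc_def hf_dsum hm_def hf_mul[OF c3])

lemma hwt_list:
  assumes "length r = m" "\<And>j. j < m \<Longrightarrow> (v j :: 'a) = hf (r!j)"
  shows "hwt m v = wtl r"
proof -
  have "{j. j < m \<and> v j \<noteq> 0} = {j. j < length r \<and> r!j \<noteq> Z}"
    using assms by (auto simp: hf_zero[OF c3])
  thus ?thesis by (simp add: hwt_def wtl_def length_filter_conv_card)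
qed

end


lemma mulv_scale: "mulv m A (vscale c x) = vscale c (mulv m A x)"
  by (simp add: mulv_def vscale_def fun_eq_iff sum_distrib_left mult.assoc)

lemma hwt_scale: "(c::'a::field) \<noteq> 0 \<Longrightarrow> hwt m (vscale c v) = hwt m v"
  by (simp add: hwt_def vscale_def)

lemma sorted3:
  assumes "sorted_wrt (<) l" "length l = 3"
  obtains c b a where "l = [c, b, a]" "c < (b::nat)" "b < a"
proof -
  obtain c b a where "l = [c, b, a]" using assms(2)
    by (metis One_nat_def length_0_conv length_Suc_conv numeral_3_eq_3)
  thus ?thesis using assms(1) that by auto
qed

lemma sorted2:
  assumes "sorted_wrt (<) l" "length l = 2"
  obtains b a where "l = [b, a]" "b < (a::nat)"
proof -
  obtain b a where "l = [b, a]" using assms(2)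
    by (metis One_nat_def length_0_conv length_Suc_conv numeral_2_eq_2)
  thus ?thesis using assms(1) that by auto
qed

lemma sorted1:
  assumes "length l = 1"
  obtains a where "l = [a]"
  using assms by (metis One_nat_def length_0_conv length_Suc_conv)

context
  fixes TYPE :: "'a::field itself"
  assumes c3: "card (UNIV :: 'a set) = 3"
begin

lemma small:
  assumes rows: "rowsok m L" and k1: "chk1 m d L" and k2: "chk2 m d L"
    and k3: "3 \<le> t \<Longrightarrow> chk3 m d L" and t3: "t \<le> 3"
  shows "smallprop m (hm L :: nat \<Rightarrow> nat \<Rightarrow> 'a) t d"
  unfolding smallprop_def
proof (intro ballI impI)
  fix x :: "nat \<Rightarrow> 'a" assume x: "x \<in> vecs m" "x \<noteq> 0" "hwt m x \<le> t"
  have rl: "\<And>i. i < m \<Longrightarrow> length (L!i) = m" using rows by (simp add: rowsok_def allm_iff)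
  define S where "S = {i. i < m \<and> x i \<noteq> 0}"
  have Sm: "S \<subseteq> {..<m}" by (auto simp: S_def)
  have finS: "finite S" using Sm finite_subset by blast
  have hS: "hwt m x = card S" by (simp add: hwt_def S_def)
  have "\<exists>i. x i \<noteq> 0"
  proof (rule ccontr)
    assume "\<not> (\<exists>i. x i \<noteq> 0)"
    hence "x = 0" by (simp add: fun_eq_iff)
    thus False using x(2) by simp
  qed
  then obtain i0 where i0: "x i0 \<noteq> 0" by blast
  have "i0 < m"
  proof (rule ccontr)
    assume "\<not> i0 < m"
    hence "x i0 = 0" using x(1) by (simp add: vecs_def)
    thus False using i0 by simp
  qed
  hence Sne: "S \<noteq> {}" using i0 by (auto simp: S_def)
  define l where "l = sorted_list_of_set S"
  have l: "set l = S" "length l = card S" "sorted_wrt (<) l"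
    using finS by (simp_all add: l_def)
  have lne: "l \<noteq> []" using l(1) Sne by auto
  define a where "a = last l"
  have aS: "a \<in> S" using last_in_set[OF lne] l(1) by (simp add: a_def)
  hence xa: "x a \<noteq> 0" and am: "a < m" by (auto simp: S_def)
  define y where "y = vscale (inverse (x a)) x"
  have ia: "inverse (x a) \<noteq> 0" using xa by simp
  have ya: "y a = 1" using xa by (simp add: y_def vscale_def)
  have ynz: "\<And>i. y i \<noteq> 0 \<longleftrightarrow> x i \<noteq> 0" using ia by (simp add: y_def vscale_def)
  have yS: "\<And>i. i \<notin> S \<Longrightarrow> y i = 0"
  proof -
    fix i assume "i \<notin> S"
    hence "x i = 0" using x(1) by (cases "i < m") (auto simp: S_def vecs_def)
    thus "y i = 0" by (simp add: y_def vscale_def)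
  qed
  have yval: "\<And>i. i \<in> S \<Longrightarrow> \<exists>v\<in>{P,N}. y i = hf v"
  proof -
    fix i assume "i \<in> S"
    hence "y i \<noteq> 0" using ynz by (simp add: S_def)
    thus "\<exists>v\<in>{P,N}. y i = hf v" using hf_nz[OF c3] by blast
  qed
  have hy: "hwt m (mulv m (hm L) y) = hwt m (mulv m (hm L) x)"
    using ia by (simp add: y_def mulv_scale hwt_scale)
  have mv: "\<And>j. j < m \<Longrightarrow> mulv m (hm L) y j = (\<Sum>i\<in>S. y i * hm L i j)"
  proof -
    fix j assume "j < m"
    hence "mulv m (hm L) y j = (\<Sum>i<m. y i * hm L i j)" by (simp add: mulv_def)
    also have "\<dots> = (\<Sum>i\<in>S. y i * hm L i j)"
      by (rule sum.mono_neutral_right) (use Sm yS in auto)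
    finally show "mulv m (hm L) y j = (\<Sum>i\<in>S. y i * hm L i j)" .
  qed
  have cS: "card S \<le> 3" using x(3) t3 hS by simp
  have cS1: "card S \<ge> 1" using Sne finS by (simp add: Suc_le_eq card_gt_0_iff)
  have main: "d \<le> card S + hwt m (mulv m (hm L) y)"
  proof -
    consider "card S = 1" | "card S = 2" | "card S = 3" using cS cS1 by linarith
    thus ?thesis
    proof cases
      case 1
      then obtain a' where la: "l = [a']" using l(2) sorted1 by metis
      hence Sa: "S = {a}" using l(1) by (simp add: a_def)
      have "\<And>j. j < m \<Longrightarrow> mulv m (hm L) y j = hf (L!a!j)"
        using mv ya by (simp add: Sa hm_def)
      hence "hwt m (mulv m (hm L) y) = wtl (L!a)"
        by (intro hwt_list[OF c3] rl am)
      moreover have "d \<le> Suc (wtl (L!a))" using k1 am by (simp add: chk1_def allm_iff)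
      ultimately show ?thesis using 1 by simp
    next
      case 2
      then obtain b a' where lb: "l = [b, a']" "b < a'" using l(2,3) sorted2 by metis
      hence aa: "a' = a" by (simp add: a_def)
      have Sb: "S = {b, a}" using l(1) lb aa by simp
      have ba: "b < a" using lb aa by simp
      obtain vb where vb: "vb \<in> {P,N}" "y b = hf vb" using yval Sb by blast
      have "\<And>j. j < m \<Longrightarrow> mulv m (hm L) y j = hf ((vadd (L!a) (sc vb (L!b)))!j)"
        using mv ya vb ba am rl[of a] rl[of b]
        by (simp add: Sb hm_def vadd_def sc_def hf_add[OF c3] hf_mul[OF c3] add.commute)
      hence "hwt m (mulv m (hm L) y) = wtl (vadd (L!a) (sc vb (L!b)))"
        using ba am rl[of a] rl[of b] by (intro hwt_list[OF c3]) (simp_all add: vadd_def sc_def)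
      moreover have "d \<le> 2 + wtl (vadd (L!a) (sc vb (L!b)))"
        using k2 am ba vb by (auto simp: chk2_def allm_iff)
      ultimately show ?thesis using 2 by simp
    next
      case 3
      hence t: "3 \<le> t" using x(3) hS by simp
      obtain c b a' where lc: "l = [c, b, a']" "c < b" "b < a'" using l(2,3) 3 sorted3 by metis
      hence aa: "a' = a" by (simp add: a_def)
      have Sc: "S = {c, b, a}" using l(1) lc aa by simp
      have ba: "b < a" "c < b" using lc aa by simp_all
      obtain vb where vb: "vb \<in> {P,N}" "y b = hf vb" using yval Sc by blast
      obtain vc where vc: "vc \<in> {P,N}" "y c = hf vc" using yval Sc by blast
      have "\<And>j. j < m \<Longrightarrow> mulv m (hm L) y j = hf ((vadd (L!a) (vadd (sc vb (L!b)) (sc vc (L!c))))!j)"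
        using mv ya vb vc ba am rl[of a] rl[of b] rl[of c]
        by (simp add: Sc hm_def vadd_def sc_def hf_add[OF c3] hf_mul[OF c3] algebra_simps)
      hence "hwt m (mulv m (hm L) y) = wtl (vadd (L!a) (vadd (sc vb (L!b)) (sc vc (L!c))))"
        using ba am rl[of a] rl[of b] rl[of c] by (intro hwt_list[OF c3]) (simp_all add: vadd_def sc_def)
      moreover have "d \<le> 3 + wtl (vadd (L!a) (vadd (sc vb (L!b)) (sc vc (L!c))))"
        using k3[OF t] am ba vb vc by (auto simp: chk3_def allm_iff)
      ultimately show ?thesis using 3 by simp
    qed
  qed
  show "d \<le> hwt m x + hwt m (mulv m (hm L) x)" using main hS hy by simp
qed

end


definition blockchk :: "nat \<Rightarrow> nat \<Rightarrow> nat \<Rightarrow> f3 list list \<Rightarrow> f3 list list \<Rightarrow> f3 list list \<Rightarrow> f3 list list \<Rightarrow> bool" where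
  "blockchk m d t L Bi Q K \<longleftrightarrow> 0 < m \<and> t \<le> 3 \<and> d \<le> 2*t+2 \<and> rowsok m L \<and> rowsok m Bi \<and>
     allm m (\<lambda>i. allm m (\<lambda>j. L!i!j = L!j!i)) \<and>
     allm m (\<lambda>i. allm m (\<lambda>j. Q!i!j = fadd (idm i j) (dotc m L L i j))) \<and>
     allm m (\<lambda>i. allm m (\<lambda>j. dotc m Q K i j = idm i j)) \<and>
     allm m (\<lambda>i. allm m (\<lambda>j. dotc m L Bi i j = idm i j)) \<and>
     chk1 m d L \<and> chk2 m d L \<and> (3 \<le> t \<longrightarrow> chk3 m d L) \<and>
     chk1 m d Bi \<and> chk2 m d Bi \<and> (3 \<le> t \<longrightarrow> chk3 m d Bi) \<and>
     Suc (wtl (L!0)) = d"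

lemma hf_idm: "(hf (idm i j) :: 'a::field) = (if i = j then 1 else 0)"
  by (simp add: idm_def)

context
  fixes TYPE :: "'a::field itself"
  assumes c3: "card (UNIV :: 'a set) = 3"
begin

lemma from_block:
  assumes bc: "blockchk m d t L Bi Q K" and r: "r \<ge> 1"
  shows "\<exists>C :: (nat \<Rightarrow> 'a) set. fsd_lcd_code (2*(r*m)) (r*m) d C"
proof -
  note b = bc[unfolded blockchk_def allm_iff]
  let ?A = "hm L :: nat \<Rightarrow> nat \<Rightarrow> 'a"
  have sy: "symm m ?A" using b by (simp add: symm_def hm_def)
  have lcd: "lcdprop m ?A"
  proof (rule lcd_from_inv[where Q = "hm Q" and K = "hm K"])
    fix i k assume "i < m" "k < m"
    hence "Q!i!k = fadd (idm i k) (dotc m L L i k)" using b by blast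
    hence "(hm Q i k :: 'a) = hf (fadd (idm i k) (dotc m L L i k))" by (simp add: hm_def)
    thus "(hm Q i k :: 'a) = (if i = k then 1 else 0) + (\<Sum>l<m. ?A i l * ?A l k)"
      by (simp add: hf_add[OF c3] hf_dotc[OF c3] hf_idm)
  next
    fix i j assume "i < m" "j < m"
    hence "dotc m Q K i j = idm i j" using b by blast
    hence "(hf (dotc m Q K i j) :: 'a) = hf (idm i j)" by simp
    thus "(\<Sum>k<m. (hm Q i k :: 'a) * hm K k j) = (if i = j then 1 else 0)"
      by (simp add: hf_dotc[OF c3] hf_idm)
  qed
  have inv: "\<And>i j. i < m \<Longrightarrow> j < m \<Longrightarrow> (\<Sum>k<m. ?A i k * hm Bi k j) = (if i = j then 1 else 0)"
  proof -
    fix i j assume "i < m" "j < m"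
    hence "dotc m L Bi i j = idm i j" using b by blast
    hence "(hf (dotc m L Bi i j) :: 'a) = hf (idm i j)" by simp
    thus "(\<Sum>k<m. ?A i k * hm Bi k j) = (if i = j then 1 else 0)"
      by (simp add: hf_dotc[OF c3] hf_idm)
  qed
  have sa: "smallprop m ?A t d"
    using b by (intro small[OF c3]) (simp_all add: rowsok_def allm_iff)
  have sb: "smallprop m (hm Bi :: nat \<Rightarrow> nat \<Rightarrow> 'a) t d"
    using b by (intro small[OF c3]) (simp_all add: rowsok_def allm_iff)
  have dist: "\<And>x. x \<in> vecs m \<Longrightarrow> x \<noteq> 0 \<Longrightarrow> d \<le> hwt m x + hwt m (mulv m ?A x)"
    using dist_from_small[OF sa sb inv] b by blast
  have m0: "0 < m" using b by simp
  let ?x0 = "ev 0 :: nat \<Rightarrow> 'a"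
  have x0v: "?x0 \<in> vecs m" using m0 by (rule ev_vecs)
  have x0n: "?x0 \<noteq> 0"
  proof
    assume "?x0 = 0"
    hence "?x0 0 = 0" by simp
    thus False by (simp add: ev_def)
  qed
  have "{i. i < m \<and> ?x0 i \<noteq> 0} = {0}" using m0 by (auto simp: ev_def)
  hence h1: "hwt m ?x0 = 1" by (simp add: hwt_def)
  have l0: "length (L!0) = m" using b m0 by (simp add: rowsok_def allm_iff)
  have "\<And>j. j < m \<Longrightarrow> mulv m ?A ?x0 j = hf (L!0!j)"
    by (simp add: mulv_def ev_def hm_def if_distrib[of "\<lambda>t. t * _"] sum.delta m0 cong: if_cong)
  hence h2: "hwt m (mulv m ?A ?x0) = wtl (L!0)" by (intro hwt_list[OF c3] l0)
  have ach: "hwt m ?x0 + hwt m (mulv m ?A ?x0) = d" using h1 h2 b by simp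
  show ?thesis by (rule blk_main[OF sy lcd dist x0v x0n ach r])
qed

end

definition L8 :: "f3 list list" where
  "L8 = [[Z, Z, N, P, P, Z, Z, N], [Z, N, N, P, N, P, P, N], [N, N, Z, Z, P, N, P, Z], [P, P, Z, Z, Z, P, P, P], [P, N, P, Z, P, N, Z, P], [Z, P, N, P, N, N, Z, Z], [Z, P, P, P, Z, Z, P, Z], [N, N, Z, P, P, Z, Z, Z]]"

definition B8 :: "f3 list list" where
  "B8 = [[N, Z, N, N, Z, Z, N, N], [Z, P, N, N, N, N, P, N], [N, N, N, N, N, Z, Z, N], [N, N, N, Z, P, N, N, N], [Z, N, N, P, P, Z, P, Z], [Z, N, Z, N, Z, Z, N, N], [N, P, Z, N, P, N, P, Z], [N, N, N, N, Z, N, Z, Z]]"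

definition Q8 :: "f3 list list" where
  "Q8 = [[N, N, P, N, N, P, Z, N], [N, N, Z, Z, Z, P, Z, P], [P, Z, Z, P, N, N, Z, Z], [N, Z, P, Z, Z, Z, N, P], [N, Z, N, Z, P, P, Z, P], [P, P, N, Z, P, Z, P, N], [Z, Z, Z, N, Z, P, N, Z], [N, P, Z, P, P, N, Z, N]]"

definition K8 :: "f3 list list" where
  "K8 = [[P, P, Z, Z, N, N, N, Z], [P, Z, P, Z, Z, P, P, P], [Z, P, Z, P, N, P, Z, Z], [Z, Z, P, N, P, P, N, N], [N, Z, N, P, Z, Z, N, N], [N, P, P, P, Z, Z, N, Z], [N, P, Z, N, N, N, N, P], [Z, P, Z, N, N, Z, P, P]]"

definition L9 :: "f3 list list" where
  "L9 = [[P, Z, Z, P, N, P, Z, N, Z], [Z, P, P, Z, N, N, Z, N, P], [Z, P, P, N, N, P, N, P, Z], [P, Z, N, N, N, P, P, Z, N], [N, N, N, N, N, N, Z, Z, Z], [P, N, P, P, N, P, P, P, P], [Z, Z, N, P, Z, P, Z, N, P], [N, N, P, Z, Z, P, N, P, N], [Z, P, Z, N, Z, P, P, N, P]]"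

definition B9 :: "f3 list list" where
  "B9 = [[Z, N, P, Z, N, P, Z, P, P], [N, Z, N, N, N, P, N, Z, N], [P, N, Z, Z, P, N, P, N, Z], [Z, N, Z, N, P, P, N, N, N], [N, N, P, P, P, P, N, Z, N], [P, P, N, P, P, Z, N, P, N], [Z, N, P, N, N, N, Z, N, Z], [P, Z, N, N, Z, P, N, P, Z], [P, N, Z, N, N, N, Z, Z, N]]"

definition Q9 :: "f3 list list" where
  "Q9 = [[Z, P, Z, N, P, Z, Z, N, P], [P, P, P, P, Z, Z, Z, Z, N], [Z, P, N, P, N, P, P, Z, P], [N, P, P, N, P, P, Z, N, N], [P, Z, N, P, P, P, N, Z, N], [Z, Z, P, P, P, P, P, P, Z], [Z, Z, P, Z, N, P, Z, P, N], [N, Z, Z, N, Z, P, P, N, Z], [P, N, P, N, N, Z, N, Z, P]]"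

definition K9 :: "f3 list list" where
  "K9 = [[Z, P, Z, N, P, N, N, N, Z], [P, Z, N, P, Z, N, N, N, Z], [Z, N, N, N, Z, P, P, Z, Z], [N, P, N, P, Z, P, N, Z, Z], [P, Z, Z, Z, Z, Z, N, P, P], [N, N, P, P, Z, P, Z, P, Z], [N, N, P, N, N, Z, P, Z, P], [N, N, Z, Z, P, P, Z, P, P], [Z, Z, Z, Z, P, Z, P, P, Z]]"

definition L10 :: "f3 list list" where
  "L10 = [[N, P, Z, Z, P, Z, N, Z, N, Z], [P, Z, P, Z, N, N, N, P, P, Z], [Z, P, P, N, P, N, Z, Z, P, P], [Z, Z, N, Z, P, N, N, Z, Z, N], [P, N, P, P, P, P, N, P, Z, Z], [Z, N, N, N, P, N, Z, P, Z, Z], [N, N, Z, N, N, Z, N, P, Z, N], [Z, P, Z, Z, P, P, P, N, P, P], [N, P, P, Z, Z, Z, Z, P, Z, P], [Z, Z, P, N, Z, Z, N, P, P, N]]"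

definition B10 :: "f3 list list" where
  "B10 = [[N, P, N, P, Z, N, Z, Z, P, N], [P, Z, P, P, Z, P, P, Z, P, Z], [N, P, Z, N, Z, P, N, P, Z, Z], [P, P, N, P, P, P, Z, P, P, Z], [Z, Z, Z, P, N, Z, P, N, P, P], [N, P, P, P, Z, P, Z, N, N, P], [Z, P, N, Z, P, Z, P, N, P, P], [Z, Z, P, P, N, N, N, N, Z, Z], [P, P, Z, P, P, N, P, Z, Z, P], [N, Z, Z, Z, P, P, P, Z, P, N]]"

definition Q10 :: "f3 list list" where
  "Q10 = [[Z, P, P, N, Z, Z, Z, Z, N, Z], [P, N, N, Z, N, Z, N, Z, P, P], [P, N, N, Z, N, P, P, Z, Z, N], [N, Z, Z, Z, Z, Z, P, P, P, P], [Z, N, N, Z, Z, Z, Z, N, Z, N], [Z, Z, P, Z, Z, P, N, P, N, P], [Z, N, P, P, Z, N, N, P, Z, P], [Z, Z, Z, P, N, P, P, N, P, P], [N, P, Z, P, Z, N, Z, P, Z, P], [Z, P, N, P, N, P, P, P, P, P]]"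

definition K10 :: "f3 list list" where
  "K10 = [[N, Z, P, Z, P, Z, Z, N, Z, Z], [Z, P, N, Z, Z, P, Z, N, Z, P], [P, N, N, P, Z, P, N, Z, Z, N], [Z, Z, P, Z, N, N, P, N, P, Z], [P, Z, Z, N, Z, Z, P, Z, P, N], [Z, P, P, N, Z, P, N, Z, Z, P], [Z, Z, N, P, P, N, P, P, P, Z], [N, N, Z, N, Z, Z, P, Z, Z, P], [Z, Z, Z, P, P, Z, P, Z, N, Z], [Z, P, N, Z, N, P, Z, P, Z, N]]"

definition L11 :: "f3 list list" where
  "L11 = [[Z, N, Z, Z, P, N, P, Z, Z, N, N], [N, P, P, N, N, P, Z, N, Z, P, P], [Z, P, P, N, N, N, P, N, Z, N, N], [Z, N, N, P, N, P, Z, P, N, Z, N], [P, N, N, N, Z, P, N, P, P, Z, N], [N, P, N, P, P, P, P, Z, N, N, Z], [P, Z, P, Z, N, P, Z, N, N, Z, P], [Z, N, N, P, P, Z, N, Z, N, N, N], [Z, Z, Z, N, P, N, N, N, N, Z, N], [N, P, N, Z, Z, N, Z, N, Z, N, Z], [N, P, N, N, N, Z, P, N, N, Z, N]]"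

definition B11 :: "f3 list list" where
  "B11 = [[Z, P, N, N, Z, N, P, Z, P, Z, Z], [P, N, N, P, N, P, N, P, N, Z, P], [N, N, Z, Z, N, N, P, N, Z, N, Z], [N, P, Z, N, N, N, Z, N, P, P, P], [Z, N, N, N, P, P, N, N, Z, Z, Z], [N, P, N, N, P, P, N, Z, Z, N, N], [P, N, P, Z, N, N, P, P, N, Z, N], [Z, P, N, N, N, Z, P, P, Z, P, P], [P, N, Z, P, Z, Z, N, Z, Z, P, N], [Z, Z, N, P, Z, N, Z, P, P, Z, P], [Z, P, Z, P, Z, N, N, P, N, P, P]]"

definition Q11 :: "f3 list list" where
  "Q11 = [[P, P, N, Z, Z, P, Z, Z, N, P, Z], [P, P, N, Z, Z, N, P, Z, N, Z, Z], [N, N, P, Z, Z, N, P, Z, N, Z, N], [Z, Z, Z, Z, Z, N, Z, P, P, P, P], [Z, Z, Z, Z, P, Z, P, N, Z, Z, P], [P, N, N, N, Z, P, N, Z, N, Z, Z], [Z, P, P, Z, P, N, N, P, N, P, Z], [Z, Z, Z, P, N, Z, P, Z, Z, P, N], [N, N, N, P, Z, N, N, Z, N, N, N], [P, Z, Z, P, Z, Z, P, P, N, P, P], [Z, Z, N, P, P, Z, Z, N, N, P, P]]"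

definition K11 :: "f3 list list" where
  "K11 = [[Z, P, Z, Z, P, N, P, Z, Z, P, P], [P, Z, N, Z, Z, Z, N, N, Z, P, Z], [Z, N, P, P, N, Z, N, P, Z, N, Z], [Z, Z, P, N, P, Z, N, N, P, N, N], [P, Z, N, P, P, Z, P, Z, Z, P, N], [N, Z, Z, Z, Z, Z, P, Z, Z, P, N], [P, N, N, N, P, P, P, Z, P, N, P], [Z, N, P, N, Z, Z, Z, P, P, Z, P], [Z, Z, Z, P, Z, Z, P, P, P, P, Z], [P, P, N, N, P, P, N, Z, P, Z, Z], [P, Z, Z, N, N, N, P, P, Z, Z, P]]"

definition L12 :: "f3 list list" where
  "L12 = [[Z, P, Z, P, Z, Z, Z, P, N, Z, N, P], [P, P, Z, P, N, P, N, N, N, Z, P, N], [Z, Z, N, N, N, N, N, N, N, P, Z, Z], [P, P, N, Z, P, P, N, Z, N, Z, N, N], [Z, N, N, P, P, Z, N, Z, N, P, P, N], [Z, P, N, P, Z, P, Z, N, P, P, Z, P], [Z, N, N, N, N, Z, Z, N, N, P, P, P], [P, N, N, Z, Z, N, N, N, Z, P, P, N], [N, N, N, N, N, P, N, Z, Z, N, N, N], [Z, Z, P, Z, P, P, P, P, N, P, P, P], [N, P, Z, N, P, Z, P, P, N, P, Z, Z], [P, N, Z, N, N, P, P, N, N, P, Z, P]]"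

definition B12 :: "f3 list list" where
  "B12 = [[P, P, Z, P, Z, Z, N, P, P, N, Z, N], [P, P, N, N, N, P, N, N, Z, N, Z, P], [Z, N, N, P, N, Z, N, P, P, P, P, P], [P, N, P, P, Z, P, Z, Z, P, P, Z, P], [Z, N, N, Z, Z, P, N, Z, Z, N, N, Z], [Z, P, Z, P, P, P, P, Z, Z, P, N, Z], [N, N, N, Z, N, P, N, N, Z, Z, N, P], [P, N, P, Z, Z, Z, N, Z, Z, Z, P, N], [P, Z, P, P, Z, Z, Z, Z, Z, N, N, P], [N, N, P, P, N, P, Z, Z, N, P, P, Z], [Z, Z, P, Z, N, N, N, P, N, P, N, Z], [N, P, P, P, Z, Z, P, N, P, Z, Z, Z]]"

definition Q12 :: "f3 list list" where
  "Q12 = [[P, Z, N, N, N, P, P, N, P, N, N, N], [Z, N, N, P, Z, N, P, Z, Z, N, Z, P], [N, N, Z, P, N, Z, Z, N, N, Z, Z, Z], [N, P, P, P, Z, P, P, P, N, N, P, N], [N, Z, N, Z, P, Z, N, Z, Z, P, Z, N], [P, N, Z, P, Z, Z, P, Z, P, Z, N, P], [P, P, Z, P, N, P, P, P, P, P, Z, P], [N, Z, N, P, Z, Z, P, P, Z, Z, Z, P], [P, Z, N, N, Z, P, P, Z, N, P, P, Z], [N, N, Z, N, P, Z, P, Z, P, P, N, Z], [N, Z, Z, P, Z, N, Z, Z, P, N, Z, Z], [N, P, Z, N, N, P, P, P, Z, Z, Z, N]]"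

definition K12 :: "f3 list list" where
  "K12 = [[P, N, Z, N, P, Z, N, Z, P, N, P, Z], [N, Z, Z, P, Z, P, P, N, Z, P, N, P], [Z, Z, N, N, Z, P, N, Z, P, N, Z, P], [N, P, N, N, P, N, P, P, Z, P, P, Z], [P, Z, Z, P, N, P, N, P, Z, N, P, Z], [Z, P, P, N, P, Z, N, Z, Z, N, N, Z], [N, P, N, P, N, N, N, N, Z, Z, Z, N], [Z, N, Z, P, P, Z, N, P, Z, P, P, Z], [P, Z, P, Z, Z, Z, Z, Z, N, P, N, N], [N, P, N, P, N, N, Z, P, P, P, N, N], [P, N, Z, P, P, N, Z, P, N, N, P, N], [Z, P, P, Z, Z, Z, N, Z, N, N, N, N]]"

definition L13 :: "f3 list list" where
  "L13 = [[Z, Z, Z, Z, Z, P, N, P, P, Z, N, Z, N], [Z, N, Z, N, Z, N, N, P, P, P, Z, Z, N], [Z, Z, P, P, P, N, N, N, N, Z, P, Z, N], [Z, N, P, Z, N, Z, P, N, Z, Z, Z, P, Z], [Z, Z, P, N, P, P, N, N, P, P, N, N, P], [P, N, N, Z, P, P, P, Z, P, N, P, P, P], [N, N, N, P, N, P, N, P, P, N, N, Z, P], [P, P, N, N, N, Z, P, N, N, N, Z, P, P], [P, P, N, Z, P, P, P, N, N, N, P, N, Z], [Z, P, Z, Z, P, N, N, N, N, Z, P, N, Z], [N, Z, P, Z, N, P, N, Z, P, P, P, N, Z], [Z, Z, Z, P, N, P, Z, P, N, N, N, Z, P], [N, N, N, Z, P, P, P, P, Z, Z, Z, P, N]]"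

definition B13 :: "f3 list list" where
  "B13 = [[Z, N, P, P, N, Z, P, Z, N, P, P, N, N], [N, P, P, Z, P, N, P, Z, P, P, N, Z, Z], [P, P, Z, Z, N, N, P, P, Z, P, P, Z, P], [P, Z, Z, N, P, N, P, N, P, P, N, Z, N], [N, P, N, P, Z, Z, N, N, N, P, P, N, P], [Z, N, N, N, Z, P, N, Z, Z, P, N, P, Z], [P, P, P, P, N, N, P, N, P, Z, Z, Z, P], [Z, Z, P, N, N, Z, N, Z, Z, Z, N, N, N], [N, P, Z, P, N, Z, P, Z, N, Z, N, N, N], [P, P, P, P, P, P, Z, Z, Z, Z, P, P, Z], [P, N, P, N, P, N, Z, N, N, P, P, P, N], [N, Z, Z, Z, N, P, Z, N, N, P, P, P, P], [N, Z, P, N, P, Z, P, N, N, Z, N, P, P]]"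

definition Q13 :: "f3 list list" where
  "Q13 = [[P, Z, P, P, N, N, P, N, Z, Z, N, P, N], [Z, Z, Z, N, P, P, Z, P, Z, N, N, N, P], [P, Z, P, Z, N, Z, P, Z, P, Z, Z, Z, P], [P, N, Z, P, N, P, N, N, P, Z, Z, Z, Z], [N, P, N, N, Z, N, Z, Z, N, P, P, P, Z], [N, P, Z, P, N, Z, N, Z, P, Z, Z, Z, P], [P, Z, P, N, Z, N, P, P, N, P, N, Z, N], [N, P, Z, N, Z, Z, P, Z, N, Z, P, N, P], [Z, Z, P, P, N, P, N, N, Z, P, Z, Z, Z], [Z, N, Z, Z, P, Z, P, Z, P, Z, Z, Z, N], [N, N, Z, Z, P, Z, N, P, Z, Z, P, N, P], [P, N, Z, Z, P, Z, Z, N, Z, Z, N, Z, Z], [N, P, P, Z, Z, P, N, P, Z, N, P, Z, P]]"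

definition K13 :: "f3 list list" where
  "K13 = [[P, Z, P, N, Z, N, P, N, P, P, N, P, N], [Z, Z, N, N, N, P, Z, Z, N, Z, N, N, P], [P, N, P, P, P, Z, N, Z, Z, P, Z, Z, P], [N, N, P, N, N, P, P, N, Z, P, Z, Z, P], [Z, N, P, N, Z, P, Z, Z, N, N, P, N, Z], [N, P, Z, P, P, Z, Z, N, P, N, Z, P, P], [P, Z, N, P, Z, Z, Z, N, Z, N, N, Z, Z], [N, Z, Z, N, Z, N, N, P, Z, N, P, Z, N], [P, N, Z, Z, N, P, Z, Z, N, N, P, N, N], [P, Z, P, P, N, N, N, N, N, N, P, P, N], [N, N, Z, Z, P, Z, N, P, P, P, Z, Z, N], [P, N, Z, Z, N, P, Z, Z, N, P, Z, P, N], [N, P, P, P, Z, P, Z, N, N, N, N, N, P]]"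

definition L14 :: "f3 list list" where
  "L14 = [[Z, Z, N, N, Z, Z, Z, N, Z, Z, P, P, P, P], [Z, P, P, N, Z, N, P, N, Z, Z, N, P, P, Z], [N, P, P, P, N, N, Z, P, N, Z, P, N, N, N], [N, N, P, N, Z, P, N, Z, P, N, N, Z, P, P], [Z, Z, N, Z, Z, N, N, N, Z, Z, N, N, P, N], [Z, N, N, P, N, N, Z, N, N, P, Z, N, N, Z], [Z, P, Z, N, N, Z, P, Z, P, P, Z, P, N, Z], [N, N, P, Z, N, N, Z, N, Z, N, Z, P, N, Z], [Z, Z, N, P, Z, N, P, Z, P, P, N, N, N, P], [Z, Z, Z, N, Z, P, P, N, P, Z, Z, N, N, Z], [P, N, P, N, N, Z, Z, Z, N, Z, Z, N, P, N], [P, P, N, Z, N, N, P, P, N, N, N, P, N, Z], [P, P, N, P, P, N, N, N, N, N, P, N, Z, Z], [P, Z, N, P, N, Z, Z, Z, P, Z, N, Z, Z, P]]"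

definition B14 :: "f3 list list" where
  "B14 = [[N, P, Z, Z, Z, Z, Z, N, N, N, N, N, P, P], [P, N, P, P, Z, Z, Z, Z, N, N, N, P, Z, N], [Z, P, P, P, N, N, N, Z, N, Z, Z, Z, N, Z], [Z, P, P, P, Z, P, P, P, Z, Z, Z, P, N, Z], [Z, Z, N, Z, Z, P, N, N, Z, Z, N, P, Z, P], [Z, Z, N, P, P, P, N, Z, Z, Z, P, P, P, Z], [Z, Z, N, P, N, N, Z, Z, P, N, P, Z, N, Z], [N, Z, Z, P, N, Z, Z, Z, N, P, Z, N, N, Z], [N, N, N, Z, Z, Z, P, N, N, Z, P, P, Z, N], [N, N, Z, Z, Z, Z, N, P, Z, Z, Z, P, N, P], [N, N, Z, Z, N, P, P, Z, P, Z, N, N, P, P], [N, P, Z, P, P, P, Z, N, P, P, N, N, Z, N], [P, Z, N, N, Z, P, N, N, Z, N, P, Z, N, Z], [P, N, Z, Z, P, Z, Z, Z, N, P, P, N, Z, Z]]"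

definition Q14 :: "f3 list list" where
  "Q14 = [[N, N, P, P, Z, N, P, Z, P, Z, N, N, P, Z], [N, P, P, P, P, Z, Z, N, N, Z, P, N, P, N], [P, P, P, P, N, Z, Z, N, Z, P, P, N, N, Z], [P, P, P, Z, Z, P, P, N, Z, P, P, P, P, Z], [Z, P, N, Z, Z, Z, Z, N, P, N, N, N, P, P], [N, Z, Z, P, Z, N, N, N, N, Z, P, P, Z, N], [P, Z, Z, P, Z, N, Z, P, N, Z, P, Z, P, P], [Z, N, N, N, N, N, P, P, N, Z, Z, P, P, N], [P, N, Z, Z, P, N, N, N, N, N, N, N, Z, N], [Z, Z, P, P, N, Z, Z, Z, N, N, Z, P, P, Z], [N, P, P, P, N, P, P, Z, N, Z, P, N, N, P], [N, N, N, P, N, P, Z, P, N, P, N, P, P, Z], [P, P, N, P, P, Z, P, P, Z, P, N, P, P, Z], [Z, N, Z, Z, P, N, P, N, N, Z, P, Z, Z, N]]"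

definition K14 :: "f3 list list" where
  "K14 = [[Z, N, Z, Z, Z, N, Z, Z, P, P, N, P, P, Z], [N, Z, N, P, N, N, N, N, P, N, N, P, P, P], [Z, N, N, P, P, P, N, P, N, P, P, N, N, P], [Z, P, P, Z, P, N, P, N, Z, Z, P, N, P, P], [Z, N, P, P, Z, P, P, Z, N, P, N, N, N, P], [N, N, P, N, P, Z, P, P, P, P, Z, N, P, P], [Z, N, N, P, P, P, P, Z, Z, P, Z, Z, N, N], [Z, N, P, N, Z, P, Z, Z, Z, N, P, N, Z, P], [P, P, N, Z, N, P, Z, Z, N, P, Z, N, P, P], [P, N, P, Z, P, P, P, N, P, P, P, N, P, Z], [N, N, P, P, N, Z, Z, P, Z, P, Z, P, Z, N], [P, P, N, N, N, N, Z, N, N, N, P, Z, N, N], [P, P, N, P, N, P, N, Z, P, P, Z, N, N, P], [Z, P, P, P, P, P, N, P, P, Z, N, N, P, Z]]"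

definition L15 :: "f3 list list" where
  "L15 = [[P, Z, P, Z, Z, P, P, Z, Z, Z, N, Z, Z, P, P], [Z, Z, N, N, Z, Z, P, N, P, N, P, N, Z, P, P], [P, N, P, Z, P, Z, N, P, N, Z, P, N, P, P, Z], [Z, N, Z, N, N, P, P, Z, N, Z, N, N, N, P, N], [Z, Z, P, N, N, P, N, N, Z, P, Z, N, N, Z, Z], [P, Z, Z, P, P, Z, P, N, Z, P, N, N, Z, Z, P], [P, P, N, P, N, P, N, Z, N, N, N, Z, P, Z, N], [Z, N, P, Z, N, N, Z, Z, P, N, P, Z, Z, N, N], [Z, P, N, N, Z, Z, N, P, Z, N, N, N, N, N, Z], [Z, N, Z, Z, P, P, N, N, N, Z, Z, Z, P, Z, N], [N, P, P, N, Z, N, N, P, N, Z, Z, Z, P, Z, Z], [Z, N, N, N, N, N, Z, Z, N, Z, Z, P, Z, N, N], [Z, Z, P, N, N, Z, P, Z, N, P, P, Z, P, P, P], [P, P, P, P, Z, Z, Z, N, N, Z, Z, N, P, P, Z], [P, P, Z, N, Z, P, N, N, Z, N, Z, N, P, Z, Z]]"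

definition B15 :: "f3 list list" where
  "B15 = [[Z, N, Z, P, N, N, Z, N, Z, P, N, N, N, N, N], [N, P, Z, Z, N, N, N, N, Z, P, P, Z, Z, N, N], [Z, Z, N, P, Z, N, P, N, Z, N, N, N, Z, P, N], [P, Z, P, N, N, Z, Z, N, Z, P, N, N, Z, Z, Z], [N, N, Z, N, P, Z, N, Z, P, N, P, Z, N, N, P], [N, N, N, Z, Z, P, Z, N, N, Z, Z, N, N, P, Z], [Z, N, P, Z, N, Z, Z, N, P, N, P, Z, N, P, N], [N, N, N, N, Z, N, N, Z, N, P, N, P, Z, P, N], [Z, Z, Z, Z, P, N, P, N, P, P, N, Z, N, P, P], [P, P, N, P, N, Z, N, P, P, N, P, Z, P, N, Z], [N, P, N, N, P, Z, P, N, N, P, Z, Z, Z, Z, P], [N, Z, N, N, Z, N, Z, P, Z, Z, Z, P, Z, N, P], [N, Z, Z, Z, N, N, N, Z, N, P, Z, Z, N, P, N], [N, N, P, Z, N, P, P, P, P, N, Z, N, P, N, N], [N, N, N, Z, P, Z, N, N, P, Z, P, P, N, N, N]]"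

definition Q15 :: "f3 list list" where
  "Q15 = [[N, P, P, Z, P, P, Z, Z, P, N, P, N, Z, Z, P], [P, N, N, P, Z, P, Z, Z, Z, P, Z, P, N, Z, Z], [P, N, Z, Z, Z, Z, Z, Z, P, P, Z, P, Z, P, N], [Z, P, Z, Z, P, Z, P, N, P, P, P, N, N, Z, Z], [P, Z, Z, P, P, Z, N, Z, P, P, Z, N, N, P, Z], [P, P, Z, Z, Z, P, N, N, P, Z, N, N, Z, P, Z], [Z, Z, Z, P, N, N, P, P, Z, Z, Z, P, Z, P, N], [Z, Z, Z, N, Z, N, P, P, N, N, Z, Z, N, P, N], [P, Z, P, P, P, P, Z, N, N, P, N, P, P, Z, Z], [N, P, P, P, P, Z, Z, N, P, Z, Z, P, N, N, Z], [P, Z, Z, P, Z, N, Z, Z, N, Z, P, P, Z, P, P], [N, P, P, N, N, N, P, Z, P, P, P, P, Z, N, P], [Z, N, Z, N, N, Z, Z, N, P, N, Z, Z, N, Z, Z], [Z, Z, P, Z, P, P, P, P, Z, N, P, N, Z, P, P], [P, Z, N, Z, Z, Z, N, N, Z, Z, P, P, Z, P, P]]"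

definition K15 :: "f3 list list" where
  "K15 = [[N, N, N, Z, N, N, Z, N, N, N, P, P, Z, N, P], [N, P, N, N, N, P, N, N, P, P, Z, Z, N, N, N], [N, N, Z, Z, P, N, P, Z, N, Z, N, Z, N, P, N], [Z, N, Z, P, P, Z, P, N, P, P, Z, Z, Z, Z, Z], [N, N, P, P, Z, Z, Z, N, P, N, P, P, Z, N, Z], [N, P, N, Z, Z, Z, Z, P, Z, Z, Z, N, P, P, P], [Z, N, P, P, Z, Z, N, Z, P, Z, N, Z, P, P, Z], [N, N, Z, N, N, P, Z, N, Z, P, N, N, Z, P, P], [N, P, N, P, P, Z, P, Z, P, N, N, Z, N, N, Z], [N, P, Z, P, N, Z, Z, P, N, Z, Z, P, Z, Z, P], [P, Z, N, Z, P, Z, N, N, N, Z, N, Z, N, Z, Z], [P, Z, Z, Z, P, N, Z, N, Z, P, Z, P, N, Z, Z], [Z, N, N, Z, Z, P, P, Z, N, Z, N, N, N, Z, N], [N, N, P, Z, N, P, P, P, N, Z, Z, Z, Z, P, Z], [P, N, N, Z, Z, P, Z, P, Z, P, Z, Z, N, Z, Z]]"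


lemma chk8: "blockchk 8 5 2 L8 B8 Q8 K8" by code_simp

lemma chk9: "blockchk 9 6 2 L9 B9 Q9 K9" by code_simp

lemma chk10: "blockchk 10 6 2 L10 B10 Q10 K10" by code_simp

lemma chk11: "blockchk 11 7 3 L11 B11 Q11 K11" by code_simp

lemma chk12: "blockchk 12 7 3 L12 B12 Q12 K12" by code_simp

lemma chk13: "blockchk 13 7 3 L13 B13 Q13 K13" by code_simp

lemma chk14: "blockchk 14 8 3 L14 B14 Q14 K14" by code_simp

lemma chk15: "blockchk 15 8 3 L15 B15 Q15 K15" by code_simp

theorem theorem7:
  fixes s :: nat
  assumes "s \<ge> 1" and "card (UNIV :: 'a::field set) = 3"
  shows "(\<forall>n1\<in>{9, 10}. \<exists>C :: (nat \<Rightarrow> 'a) set. fsd_lcd_code (4*s*n1) (2*s*n1) 6 C)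
    \<and> (\<forall>n2\<in>{11, 12, 13}. \<exists>C :: (nat \<Rightarrow> 'a) set. fsd_lcd_code (4*s*n2) (2*s*n2) 7 C)
    \<and> (\<forall>n3\<in>{14, 15}. \<exists>C :: (nat \<Rightarrow> 'a) set. fsd_lcd_code (4*s*n3) (2*s*n3) 8 C)
    \<and> (\<exists>C :: (nat \<Rightarrow> 'a) set. fsd_lcd_code (32*s) (16*s) 5 C)"
proof -
  have r: "2*s \<ge> 1" using assms(1) by simp
  have blk: "\<And>n d t L Bi Q K. blockchk n d t L Bi Q K \<Longrightarrow>
      \<exists>C :: (nat \<Rightarrow> 'a) set. fsd_lcd_code (4*s*n) (2*s*n) d C"
  proof -
    fix n d t L Bi Q K assume "blockchk n d t L Bi Q K"
    hence "\<exists>C :: (nat \<Rightarrow> 'a) set. fsd_lcd_code (2*((2*s)*n)) ((2*s)*n) d C"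
      by (rule from_block[OF assms(2) _ r])
    moreover have "2*((2*s)*n) = 4*s*n" "(2*s)*n = 2*s*n" by simp_all
    ultimately show "\<exists>C :: (nat \<Rightarrow> 'a) set. fsd_lcd_code (4*s*n) (2*s*n) d C" by simp
  qed
  have p1: "\<forall>n1\<in>{9, 10}. \<exists>C :: (nat \<Rightarrow> 'a) set. fsd_lcd_code (4*s*n1) (2*s*n1) 6 C"
    using blk[OF chk9] blk[OF chk10] by auto
  have p2: "\<forall>n2\<in>{11, 12, 13}. \<exists>C :: (nat \<Rightarrow> 'a) set. fsd_lcd_code (4*s*n2) (2*s*n2) 7 C"
    using blk[OF chk11] blk[OF chk12] blk[OF chk13] by auto
  have p3: "\<forall>n3\<in>{14, 15}. \<exists>C :: (nat \<Rightarrow> 'a) set. fsd_lcd_code (4*s*n3) (2*s*n3) 8 C"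
    using blk[OF chk14] blk[OF chk15] by auto
  have "\<exists>C :: (nat \<Rightarrow> 'a) set. fsd_lcd_code (4*s*8) (2*s*8) 5 C" by (rule blk[OF chk8])
  moreover have "4*s*8 = 32*s" "2*s*8 = 16*s" by simp_all
  ultimately have p4: "\<exists>C :: (nat \<Rightarrow> 'a) set. fsd_lcd_code (32*s) (16*s) 5 C" by simp
  show ?thesis using p1 p2 p3 p4 by blast
qed

end
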